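(* For $n,k\geqslant 0$ let $\mathfrak{f}_{n,k}$ be the number of words of length $n$ on the alphabet $\{1,\dots,k\}$ avoiding both patterns $010$ and $120$ and containing every letter of $\{1,\dots,k\}$ (so $\mathfrak{f}_{0,0}=1$, $\mathfrak{f}_{n,0}=0$ for $n\geqslant1$, $\mathfrak{f}_{0,k}=0$ for $k\geqslant 1$). Then for all $n,k\geqslant 1$, $$\mathfrak{f}_{n,k}=\sum_{p=1}^{n}\sum_{q=0}^{k-1}\mathfrak{f}_{p-1,q}\cdot\bigl(\mathfrak{f}_{n-p,k-q}+\mathfrak{f}_{n-p,k-q-1}\bigr),$$ and the generating function $F(x,y)=\sum_{n,k\geqslant0}\mathfrak{f}_{n,k}x^ny^k$ satisfies $(x+xy)F(x,y)^2-(x+1)F(x,y)+1=0$.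
   Context: A word contains a pattern $p$ if some subsequence is order-isomorphic to $p$; otherwise it avoids $p$. Avoiding $010$: no $i<j<l$ with $\omega_i=\omega_l<\omega_j$. Avoiding $120$: no $i<j<l$ with $\omega_l<\omega_i<\omega_j$. *)

theory Defs
  imports "HOL-Computational_Algebra.Formal_Power_Series"
begin

definition avoids010 :: "nat list \<Rightarrow> bool" where
  "avoids010 w \<longleftrightarrow> \<not> (\<exists>i j l. i < j \<and> j < l \<and> l < length w \<and> w ! i = w ! l \<and> w ! l < w ! j)"

definition avoids120 :: "nat list \<Rightarrow> bool" where
  "avoids120 w \<longleftrightarrow> \<not> (\<exists>i j l. i < j \<and> j < l \<and> l < length w \<and> w ! l < w ! i \<and> w ! i < w ! j)"

definition fw :: "nat \<Rightarrow> nat \<Rightarrow> nat" where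
  "fw n k = card {w :: nat list. length w = n \<and> set w = {1..k} \<and> avoids010 w \<and> avoids120 w}"

text \<open>Bivariate generating function as an element of Z[[y]][[x]] (= Z[[x,y]]):
  outer variable x, coefficient of x^n is the series sum_k f(n,k) y^k.\<close>
definition FGF :: "int fps fps" where
  "FGF = Abs_fps (\<lambda>n. Abs_fps (\<lambda>k. int (fw n k)))"

end

theory Submission
  imports Defs
begin


definition pat :: "(nat\<Rightarrow>nat\<Rightarrow>nat\<Rightarrow>bool) \<Rightarrow> nat list \<Rightarrow> bool" where
  "pat P w \<longleftrightarrow> (\<exists>i j l. i<j \<and> j<l \<and> l<length w \<and> P (w!i) (w!j) (w!l))"

lemma a010: "avoids010 w \<longleftrightarrow> \<not> pat (\<lambda>a b c. a = c \<and> c < b) w"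
  unfolding avoids010_def pat_def by (simp add: conj_assoc)

lemma a120: "avoids120 w \<longleftrightarrow> \<not> pat (\<lambda>a b c. c < a \<and> a < b) w"
  unfolding avoids120_def pat_def by (simp add: conj_assoc)

lemma pat_app1: "pat P xs \<Longrightarrow> pat P (xs @ ys)"
proof -
  assume "pat P xs"
  then obtain i j l where h: "i<j" "j<l" "l<length xs" "P (xs!i) (xs!j) (xs!l)"
    unfolding pat_def by blast
  show ?thesis unfolding pat_def
    by (rule exI[of _ i], rule exI[of _ j], rule exI[of _ l]) (use h in \<open>simp add: nth_append\<close>)
qed

lemma pat_app2: "pat P ys \<Longrightarrow> pat P (xs @ ys)"
proof -
  assume "pat P ys"
  then obtain i j l where h: "i<j" "j<l" "l<length ys" "P (ys!i) (ys!j) (ys!l)"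
    unfolding pat_def by blast
  show ?thesis unfolding pat_def
    apply (rule exI[of _ "length xs + i"], rule exI[of _ "length xs + j"], rule exI[of _ "length xs + l"])
    using h by (simp add: nth_append)
qed

lemma pat_map: "pat P (map f w) \<longleftrightarrow> pat (\<lambda>a b c. P (f a) (f b) (f c)) w"
proof
  assume "pat P (map f w)"
  then obtain i j l where h: "i<j" "j<l" "l<length w" "P (map f w!i) (map f w!j) (map f w!l)"
    unfolding pat_def by auto
  then show "pat (\<lambda>a b c. P (f a) (f b) (f c)) w" unfolding pat_def
    by (intro exI[of _ i] exI[of _ j] exI[of _ l]) auto
next
  assume "pat (\<lambda>a b c. P (f a) (f b) (f c)) w"
  then obtain i j l where h: "i<j" "j<l" "l<length w" "P (f (w!i)) (f (w!j)) (f (w!l))"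
    unfolding pat_def by auto
  then show "pat P (map f w)" unfolding pat_def
    by (intro exI[of _ i] exI[of _ j] exI[of _ l]) auto
qed

definition av :: "nat list \<Rightarrow> bool" where
  "av w \<longleftrightarrow> avoids010 w \<and> avoids120 w"

lemma av_shift: "av (map ((+) q) w) \<longleftrightarrow> av w"
  unfolding av_def a010 a120 pat_map by simp

lemma av_app: "av (xs @ ys) \<Longrightarrow> av xs \<and> av ys"
  unfolding av_def a010 a120 using pat_app1 pat_app2 by blast

lemma nth_split: "(u @ c # v) ! i = (if i < length u then u ! i else if i = length u then c else v ! (i - Suc (length u)))"
  by (simp add: nth_append nth_Cons')

lemma av_concat:
  assumes "av u" "av v" "\<forall>x\<in>set u. x < c" "\<forall>x\<in>set u. \<forall>y\<in>set v. x < y" "\<forall>y\<in>set v. y \<le> c"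
  shows "av (u @ c # v)"
proof -
  let ?w = "u @ c # v" let ?m = "length u"
  have le: "\<And>x. x < length ?w \<Longrightarrow> ?w ! x \<le> c"
  proof -
    fix x assume x: "x < length ?w"
    show "?w ! x \<le> c"
    proof (cases "x < ?m")
      case True then show ?thesis using assms(3) nth_mem[OF True] by (simp add: nth_split less_imp_le)
    next
      case False
      show ?thesis
      proof (cases "x = ?m")
        case True then show ?thesis by (simp add: nth_split)
      next
        case F2: False
        have "x - Suc ?m < length v" using x False F2 by auto
        then show ?thesis using assms(5) False F2 nth_mem by (simp add: nth_split)
      qed
    qed
  qed
  have key: "\<And>P i j l. i<j \<Longrightarrow> j<l \<Longrightarrow> l<length ?w \<Longrightarrow> P (?w!i) (?w!j) (?w!l) \<Longrightarrow> \<not> pat P u \<Longrightarrow> \<not> pat P v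
     \<Longrightarrow> i \<le> ?m \<and> ?m \<le> l"
  proof (rule ccontr)
    fix P i j l assume h: "i<j" "j<l" "l<length ?w" "P (?w!i) (?w!j) (?w!l)" "\<not> pat P u" "\<not> pat P v"
      "\<not> (i \<le> ?m \<and> ?m \<le> l)"
    show False
    proof (cases "l < ?m")
      case True
      have "pat P u" unfolding pat_def using h True
        by (intro exI[of _ i] exI[of _ j] exI[of _ l]) (simp add: nth_split)
      then show ?thesis using h(5) by blast
    next
      case False
      then have "i > ?m" using h by auto
      have e: "?w!i = v!(i - Suc ?m)" "?w!j = v!(j - Suc ?m)" "?w!l = v!(l - Suc ?m)"
        using h(1,2) \<open>i > ?m\<close> by (simp_all add: nth_split)
      have ar: "i - Suc ?m < j - Suc ?m" "j - Suc ?m < l - Suc ?m" "l - Suc ?m < length v"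
        using h(1,2,3) \<open>i > ?m\<close> by auto
      have "pat P v" unfolding pat_def
        by (intro exI[of _ "i - Suc ?m"] exI[of _ "j - Suc ?m"] exI[of _ "l - Suc ?m"] conjI ar) (use h(4) e in simp)
      then show ?thesis using h(6) by blast
    qed
  qed
  have "\<not> pat (\<lambda>a b c. a = c \<and> c < b) ?w"
  proof
    assume "pat (\<lambda>a b c. a = c \<and> c < b) ?w"
    then obtain i j l where h: "i<j" "j<l" "l<length ?w" "?w!i = ?w!l" "?w!l < ?w!j"
      unfolding pat_def by blast
    have nu: "\<not> pat (\<lambda>a b c. a = c \<and> c < b) u" "\<not> pat (\<lambda>a b c. a = c \<and> c < b) v"
      using assms(1,2) unfolding av_def a010 by auto
    have r: "i \<le> ?m \<and> ?m \<le> l" by (rule key[OF h(1-3) _ nu]) (use h(4,5) in simp)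
    show False
    proof (cases "i < ?m")
      case True
      then have ui: "?w!i \<in> set u" by (simp add: nth_split)
      show ?thesis
      proof (cases "l = ?m")
        case True then show ?thesis using h ui assms(3) by (auto simp: nth_split)
      next
        case False
        then have "?w!l \<in> set v" using r h(3) by (auto simp: nth_split)
        then have "?w!i < ?w!l" using ui assms(4) by blast
        then show ?thesis using h by simp
      qed
    next
      case False
      then have "i = ?m" using r by auto
      then show ?thesis using h le[of j] by (auto simp: nth_split)
    qed
  qed
  moreover have "\<not> pat (\<lambda>a b c. c < a \<and> a < b) ?w"
  proof
    assume "pat (\<lambda>a b c. c < a \<and> a < b) ?w"
    then obtain i j l where h: "i<j" "j<l" "l<length ?w" "?w!l < ?w!i" "?w!i < ?w!j"
      unfolding pat_def by blast
    have nu: "\<not> pat (\<lambda>a b c. c < a \<and> a < b) u" "\<not> pat (\<lambda>a b c. c < a \<and> a < b) v"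
      using assms(1,2) unfolding av_def a120 by auto
    have r: "i \<le> ?m \<and> ?m \<le> l" by (rule key[OF h(1-3) _ nu]) (use h(4,5) in simp)
    show False
    proof (cases "i < ?m")
      case True
      then have ui: "?w!i \<in> set u" by (simp add: nth_split)
      show ?thesis
      proof (cases "l = ?m")
        case True
        have "?w!i < c" using ui assms(3) by blast
        with True h show ?thesis by (simp add: nth_split)
      next
        case False
        then have "?w!l \<in> set v" using r h(3) by (auto simp: nth_split)
        then have "?w!i < ?w!l" using ui assms(4) by blast
        then show ?thesis using h by simp
      qed
    next
      case False
      then have "i = ?m" using r by auto
      then show ?thesis using h le[of j] by (auto simp: nth_split)
    qed
  qed
  ultimately show ?thesis unfolding av_def a010 a120 by blast
qed


definition S :: "nat \<Rightarrow> nat \<Rightarrow> nat list set" where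
  "S n k = {w. length w = n \<and> set w = {1..k} \<and> av w}"

definition W :: "nat \<Rightarrow> nat \<Rightarrow> nat \<Rightarrow> nat list set" where
  "W m q j = {v. length v = m \<and> set v = {Suc q..j} \<and> av v}"

lemma fw_S: "fw n k = card (S n k)"
  by (simp add: fw_def S_def av_def)

lemma finS: "finite (S n k)"
proof -
  have "S n k \<subseteq> {w. set w \<subseteq> {1..k} \<and> length w = n}" by (auto simp: S_def)
  then show ?thesis using finite_lists_length_eq[of "{1..k}" n] finite_subset by blast
qed

lemma finW: "finite (W m q j)"
proof -
  have "W m q j \<subseteq> {w. set w \<subseteq> {Suc q..j} \<and> length w = m}" by (auto simp: W_def)
  then show ?thesis using finite_lists_length_eq[of "{Suc q..j}" m] finite_subset by blast
qed

lemma W_img: "q \<le> j \<Longrightarrow> W m q j = map ((+) q) ` S m (j - q)"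
proof
  assume qj: "q \<le> j"
  show "map ((+) q) ` S m (j - q) \<subseteq> W m q j"
    using qj by (auto simp: S_def W_def av_shift)
  show "W m q j \<subseteq> map ((+) q) ` S m (j - q)"
  proof
    fix v assume v: "v \<in> W m q j"
    let ?w = "map (\<lambda>x. x - q) v"
    have e: "map ((+) q) ?w = v"
      unfolding map_map by (rule map_idI) (use v in \<open>auto simp: W_def\<close>)
    have st: "set ?w = {1..j - q}"
    proof -
      have "set ?w = (\<lambda>x. x - q) ` {Suc q..j}" using v by (simp add: W_def)
      also have "\<dots> = {1..j - q}"
      proof
        show "(\<lambda>x. x - q) ` {Suc q..j} \<subseteq> {1..j - q}" by auto
        show "{1..j - q} \<subseteq> (\<lambda>x. x - q) ` {Suc q..j}"
        proof
          fix x assume "x \<in> {1..j - q}"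
          then have "x + q \<in> {Suc q..j}" "x = (x + q) - q" by auto
          then show "x \<in> (\<lambda>x. x - q) ` {Suc q..j}" by blast
        qed
      qed
      finally show ?thesis .
    qed
    have "av ?w" using v e av_shift[of q ?w] by (simp add: W_def)
    then have "?w \<in> S m (j - q)" using st v by (simp add: S_def W_def)
    then show "v \<in> map ((+) q) ` S m (j - q)" using e by force
  qed
qed

lemma W_card: "q \<le> j \<Longrightarrow> card (W m q j) = fw m (j - q)"
  by (simp add: W_img fw_S card_image inj_on_def)

lemma split_unique: "u @ c # v = u' @ c # v' \<Longrightarrow> c \<notin> set u \<Longrightarrow> c \<notin> set u' \<Longrightarrow> u = u' \<and> v = v'"
proof (induction u arbitrary: u')
  case Nil
  then show ?case by (cases u') auto
next
  case (Cons a u)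
  then show ?case by (cases u') auto
qed




definition X :: "nat \<Rightarrow> nat \<Rightarrow> nat \<Rightarrow> nat \<Rightarrow> nat list set" where
  "X n k p q = (\<lambda>(u,v). u @ k # v) ` (S (p-1) q \<times> (W (n-p) q k \<union> W (n-p) q (k-1)))"

lemma decomp_sup:
  assumes "1 \<le> n" "1 \<le> k" "p \<in> {1..n}" "q \<in> {0..k-1}"
  shows "X n k p q \<subseteq> S n k"
proof
  fix w assume "w \<in> X n k p q"
  then obtain u v where w: "w = u @ k # v" and u: "u \<in> S (p-1) q"
     and v: "v \<in> W (n-p) q k \<union> W (n-p) q (k-1)"
    unfolding X_def by auto
  obtain j where j: "j = k \<or> j = k - 1" "v \<in> W (n-p) q j" using v by blast
  have lu: "length u = p - 1" and su: "set u = {1..q}" and au: "av u" using u by (auto simp: S_def)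
  have lv: "length v = n - p" and sv: "set v = {Suc q..j}" and avv: "av v" using j by (auto simp: W_def)
  have "length w = n" using lu lv assms w by simp
  have qk: "q < k" using assms by auto
  have jk: "j \<le> k" "k - 1 \<le> j" using j by auto
  have "set w = {1..q} \<union> {k} \<union> {Suc q..j}" using su sv w by auto
  also have "\<dots> = {1..k}"
  proof (intro equalityI subsetI)
    fix x assume "x \<in> {1..q} \<union> {k} \<union> {Suc q..j}"
    then show "x \<in> {1..k}" using qk jk assms by auto
  next
    fix x assume x: "x \<in> {1..k}"
    show "x \<in> {1..q} \<union> {k} \<union> {Suc q..j}"
    proof (cases "x \<le> q")
      case True then show ?thesis using x by simp
    next
      case False
      then show ?thesis using x jk by (cases "x = k") auto
    qed
  qed
  finally have "set w = {1..k}" .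
  moreover have "av w" unfolding w
  proof (rule av_concat[OF au avv])
    show "\<forall>x\<in>set u. x < k" using su qk by auto
    show "\<forall>x\<in>set u. \<forall>y\<in>set v. x < y" using su sv by auto
    show "\<forall>y\<in>set v. y \<le> k" using sv jk by auto
  qed
  ultimately show "w \<in> S n k" using \<open>length w = n\<close> by (simp add: S_def)
qed

lemma decomp_sub:
  assumes "1 \<le> n" "1 \<le> k" "w \<in> S n k"
  shows "\<exists>p\<in>{1..n}. \<exists>q\<in>{0..k-1}. w \<in> X n k p q"
proof -
  have lw: "length w = n" and sw: "set w = {1..k}" and aw: "av w" using assms(3) by (auto simp: S_def)
  have "k \<in> set w" using sw assms by auto
  then obtain u v where w: "w = u @ k # v" and ku: "k \<notin> set u" using split_list_first by metis
  have au: "av u" and avv: "av v" using av_app[of u "k # v"] av_app[of "[k]" v] aw w by auto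
  have uk: "\<forall>x\<in>set u. x < k"
  proof
    fix x assume "x \<in> set u"
    then have "x \<in> {1..k}" "x \<noteq> k" using sw w ku by auto
    then show "x < k" by simp
  qed
  have uv: "\<forall>x\<in>set u. \<forall>y\<in>set v. x < y"
  proof (intro ballI)
    fix x y assume x: "x \<in> set u" and y: "y \<in> set v"
    obtain i where i: "i < length u" "u ! i = x" using x by (auto simp: in_set_conv_nth)
    obtain l where l: "l < length v" "v ! l = y" using y by (auto simp: in_set_conv_nth)
    let ?m = "length u"
    have wi: "w ! i = x" "w ! ?m = k" "w ! (Suc ?m + l) = y" "Suc ?m + l < length w"
      using i l w by (simp_all add: nth_split)
    have "i < ?m" "?m < Suc ?m + l" using i by auto
    then have "\<not> (w ! i = w ! (Suc ?m + l) \<and> w ! (Suc ?m + l) < w ! ?m)"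
      "\<not> (w ! (Suc ?m + l) < w ! i \<and> w ! i < w ! ?m)"
      using aw wi(4) unfolding av_def avoids010_def avoids120_def by blast+
    then show "x < y" using wi uk x by auto
  qed
  define q where "q = (if u = [] then 0 else Max (set u))"
  have su: "set u = {1..q}"
  proof (cases "u = []")
    case True then show ?thesis by (simp add: q_def)
  next
    case False
    have M: "Max (set u) \<in> set u" using False by simp
    show ?thesis
    proof
      show "set u \<subseteq> {1..q}"
      proof
        fix x assume x: "x \<in> set u"
        then have "x \<in> {1..k}" using sw w by auto
        moreover have "x \<le> Max (set u)" using x by simp
        ultimately show "x \<in> {1..q}" using False by (simp add: q_def)
      qed
      show "{1..q} \<subseteq> set u"
      proof
        fix y assume y: "y \<in> {1..q}"
        have "Max (set u) < k" using M uk by blast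
        moreover have "y \<le> Max (set u)" using y False by (simp add: q_def)
        ultimately have "y < k" by linarith
        then have "y \<in> set w" using y sw by auto
        moreover have "y \<notin> set v"
        proof
          assume "y \<in> set v"
          then have "Max (set u) < y" using uv M by blast
          moreover have "y \<le> Max (set u)" using y False by (simp add: q_def)
          ultimately show False by linarith
        qed
        ultimately show "y \<in> set u" using w \<open>y < k\<close> by auto
      qed
    qed
  qed
  have qk: "q \<le> k - 1"
  proof (cases "u = []")
    case False then have "Max (set u) \<in> set u" by simp
    then show ?thesis using uk False by (auto simp: q_def)
  qed (simp add: q_def)
  have vq: "\<forall>y\<in>set v. q < y"
  proof (cases "u = []")
    case True
    show ?thesis
    proof
      fix y assume "y \<in> set v"
      then have "y \<in> {1..k}" using sw w by auto
      then show "q < y" using True by (simp add: q_def)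
    qed
  next
    case False then show ?thesis using uv by (auto simp: q_def)
  qed
  have sv1: "set v \<subseteq> {Suc q..k}"
  proof
    fix y assume y: "y \<in> set v"
    then have "y \<in> {1..k}" using sw w by auto
    then show "y \<in> {Suc q..k}" using vq y by auto
  qed
  have sv2: "{Suc q..k-1} \<subseteq> set v"
  proof
    fix y assume y: "y \<in> {Suc q..k-1}"
    then have "y \<in> set w" "y \<noteq> k" "y \<notin> set u" using sw su assms by auto
    then show "y \<in> set v" using w by auto
  qed
  have lv: "length v = n - Suc (length u)" using lw w by simp
  have "v \<in> W (n - (Suc (length u))) q k \<union> W (n - (Suc (length u))) q (k-1)"
  proof (cases "k \<in> set v")
    case True
    have "set v = {Suc q..k}"
    proof (intro equalityI[OF sv1] subsetI)
      fix x assume "x \<in> {Suc q..k}"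
      then show "x \<in> set v" using True sv2 by (cases "x = k") auto
    qed
    then show ?thesis using avv lv by (simp add: W_def)
  next
    case False
    have "set v = {Suc q..k-1}"
    proof (intro equalityI[OF _ sv2] subsetI)
      fix x assume x: "x \<in> set v"
      then have "x \<in> {Suc q..k}" "x \<noteq> k" using sv1 False by auto
      then show "x \<in> {Suc q..k-1}" by auto
    qed
    then show ?thesis using avv lv by (simp add: W_def)
  qed
  moreover have "u \<in> S (Suc (length u) - 1) q" using su au by (simp add: S_def)
  ultimately have "(u, v) \<in> S (Suc (length u) - 1) q \<times> (W (n - (Suc (length u))) q k \<union> W (n - (Suc (length u))) q (k-1))"
    by blast
  then have "w \<in> X n k (Suc (length u)) q" unfolding X_def
    by (rule image_eqI[rotated]) (simp add: w)
  moreover have "Suc (length u) \<in> {1..n}" using lw w by auto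
  ultimately show ?thesis using qk by (intro bexI[of _ "Suc (length u)"] bexI[of _ q]) auto
qed

lemma decomp:
  assumes "1 \<le> n" "1 \<le> k"
  shows "S n k = (\<Union>p\<in>{1..n}. \<Union>q\<in>{0..k-1}. X n k p q)"
proof
  show "(\<Union>p\<in>{1..n}. \<Union>q\<in>{0..k-1}. X n k p q) \<subseteq> S n k"
    by (intro UN_least) (rule decomp_sup[OF assms])
  show "S n k \<subseteq> (\<Union>p\<in>{1..n}. \<Union>q\<in>{0..k-1}. X n k p q)"
  proof
    fix w assume "w \<in> S n k"
    then obtain p q where "p \<in> {1..n}" "q \<in> {0..k-1}" "w \<in> X n k p q"
      using decomp_sub[OF assms] by blast
    then show "w \<in> (\<Union>p\<in>{1..n}. \<Union>q\<in>{0..k-1}. X n k p q)" by blast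
  qed
qed



lemma X_elem:
  assumes "w \<in> X n k p q" "q \<le> k - 1" "1 \<le> k"
  obtains u v where "w = u @ k # v" "u \<in> S (p-1) q" "v \<in> W (n-p) q k \<union> W (n-p) q (k-1)" "k \<notin> set u"
proof -
  obtain u v where w: "w = u @ k # v" and u: "u \<in> S (p-1) q"
     and v: "v \<in> W (n-p) q k \<union> W (n-p) q (k-1)"
    using assms(1) unfolding X_def by auto
  have "set u = {1..q}" using u by (simp add: S_def)
  then have "k \<notin> set u" using assms by auto
  then show ?thesis by (rule that[OF w u v])
qed

lemma X_disj:
  assumes "w \<in> X n k p q" "w \<in> X n k p' q'" "1 \<le> k" "1 \<le> p" "1 \<le> p'" "q \<le> k - 1" "q' \<le> k - 1"
  shows "p = p' \<and> q = q'"
proof -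
  obtain u v where a: "w = u @ k # v" "u \<in> S (p-1) q" "v \<in> W (n-p) q k \<union> W (n-p) q (k-1)" "k \<notin> set u"
    by (rule X_elem[OF assms(1) assms(6) assms(3)])
  obtain u' v' where b: "w = u' @ k # v'" "u' \<in> S (p'-1) q'" "v' \<in> W (n-p') q' k \<union> W (n-p') q' (k-1)" "k \<notin> set u'"
    by (rule X_elem[OF assms(2) assms(7) assms(3)])
  have "u = u'" using split_unique[of u k v u' v'] a(1,4) b(1,4) by simp
  moreover have "length u = p - 1" "set u = {1..q}" using a by (auto simp: S_def)
  moreover have "length u' = p' - 1" "set u' = {1..q'}" using b by (auto simp: S_def)
  ultimately have "p - 1 = p' - 1" "card {1..q} = card {1..q'}" by auto
  then show ?thesis using assms(4,5) by simp
qed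

lemma finX: "finite (X n k p q)"
  unfolding X_def by (intro finite_imageI finite_cartesian_product finite_UnI finS finW)

lemma card_X:
  assumes "1 \<le> k" "q \<le> k - 1"
  shows "card (X n k p q) = fw (p-1) q * (fw (n-p) (k-q) + fw (n-p) (k-q-1))"
proof -
  let ?A = "S (p-1) q" and ?B = "W (n-p) q k \<union> W (n-p) q (k-1)"
  have inj: "inj_on (\<lambda>(u,v). u @ k # v) (?A \<times> ?B)"
  proof (rule inj_onI, clarify)
    fix u v u' v' assume h: "u \<in> ?A" "v \<in> ?B" "u' \<in> ?A" "v' \<in> ?B" "u @ k # v = u' @ k # v'"
    have "set u = {1..q}" "set u' = {1..q}" using h by (auto simp: S_def)
    then have "k \<notin> set u" "k \<notin> set u'" using assms by auto
    then show "u = u' \<and> v = v'" using split_unique[OF h(5)] by simp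
  qed
  have dj: "W (n-p) q k \<inter> W (n-p) q (k-1) = {}"
  proof -
    have "\<And>v. v \<in> W (n-p) q k \<Longrightarrow> k \<in> set v" using assms by (auto simp: W_def)
    moreover have "\<And>v. v \<in> W (n-p) q (k-1) \<Longrightarrow> k \<notin> set v" using assms by (auto simp: W_def)
    ultimately show ?thesis by blast
  qed
  have "card (X n k p q) = card (?A \<times> ?B)" unfolding X_def by (rule card_image[OF inj])
  also have "\<dots> = card ?A * card ?B" by (rule card_cartesian_product)
  also have "card ?B = card (W (n-p) q k) + card (W (n-p) q (k-1))"
    by (rule card_Un_disjoint[OF finW finW dj])
  also have "card (W (n-p) q k) = fw (n-p) (k-q)" using assms by (intro W_card) simp
  also have "card (W (n-p) q (k-1)) = fw (n-p) (k-1-q)" using assms by (intro W_card) simp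
  also have "k - 1 - q = k - q - 1" by simp
  finally show ?thesis by (simp add: fw_S)
qed

lemma recurrence:
  assumes "1 \<le> n" "1 \<le> k"
  shows "fw n k = (\<Sum>p = 1..n. \<Sum>q = 0..k - 1. fw (p - 1) q * (fw (n - p) (k - q) + fw (n - p) (k - q - 1)))"
proof -
  have "fw n k = card (\<Union>p\<in>{1..n}. \<Union>q\<in>{0..k-1}. X n k p q)"
    by (simp add: fw_S decomp[OF assms])
  also have "\<dots> = (\<Sum>p = 1..n. card (\<Union>q\<in>{0..k-1}. X n k p q))"
  proof (rule card_UN_disjoint)
    show "\<forall>p\<in>{1..n}. finite (\<Union>q\<in>{0..k-1}. X n k p q)" by (simp add: finX)
    show "\<forall>i\<in>{1..n}. \<forall>j\<in>{1..n}. i \<noteq> j \<longrightarrow> (\<Union>q\<in>{0..k-1}. X n k i q) \<inter> (\<Union>q\<in>{0..k-1}. X n k j q) = {}"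
    proof (intro ballI impI)
      fix i j assume ij: "i \<in> {1..n}" "j \<in> {1..n}" "i \<noteq> j"
      show "(\<Union>q\<in>{0..k-1}. X n k i q) \<inter> (\<Union>q\<in>{0..k-1}. X n k j q) = {}"
      proof (rule ccontr)
        assume "(\<Union>q\<in>{0..k-1}. X n k i q) \<inter> (\<Union>q\<in>{0..k-1}. X n k j q) \<noteq> {}"
        then obtain w where "w \<in> (\<Union>q\<in>{0..k-1}. X n k i q)" "w \<in> (\<Union>q\<in>{0..k-1}. X n k j q)"
          by blast
        then obtain q q' where "w \<in> X n k i q" "w \<in> X n k j q'" "q \<in> {0..k-1}" "q' \<in> {0..k-1}"
          by blast
        then have "i = j" using X_disj[of w n k i q j q'] ij assms by auto
        then show False using ij by simp
      qed
    qed
  qed simp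
  also have "\<dots> = (\<Sum>p = 1..n. \<Sum>q = 0..k - 1. card (X n k p q))"
  proof (rule sum.cong[OF refl], rule card_UN_disjoint)
    fix p assume p: "p \<in> {1..n}"
    show "\<forall>q\<in>{0..k-1}. finite (X n k p q)" by (simp add: finX)
    show "\<forall>i\<in>{0..k-1}. \<forall>j\<in>{0..k-1}. i \<noteq> j \<longrightarrow> X n k p i \<inter> X n k p j = {}"
    proof (intro ballI impI)
      fix i j assume ij: "i \<in> {0..k-1}" "j \<in> {0..k-1}" "i \<noteq> j"
      show "X n k p i \<inter> X n k p j = {}"
      proof (rule ccontr)
        assume "X n k p i \<inter> X n k p j \<noteq> {}"
        then obtain w where "w \<in> X n k p i" "w \<in> X n k p j" by blast
        then have "i = j" using X_disj[of w n k p i p j] ij p assms by auto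
        then show False using ij by simp
      qed
    qed
  qed simp
  also have "\<dots> = (\<Sum>p = 1..n. \<Sum>q = 0..k - 1. fw (p - 1) q * (fw (n - p) (k - q) + fw (n - p) (k - q - 1)))"
    by (intro sum.cong refl card_X) (use assms in auto)
  finally show ?thesis .
qed



lemma av_Nil: "avoids010 [] \<and> avoids120 []"
  by (simp add: avoids010_def avoids120_def)

lemma fw_n0: "fw n 0 = (if n = 0 then 1 else 0)"
proof -
  have "{w :: nat list. length w = n \<and> set w = {1..0} \<and> avoids010 w \<and> avoids120 w} = (if n = 0 then {[]} else {})"
    using av_Nil by auto
  then show ?thesis by (simp add: fw_def)
qed

lemma fw_0k: "fw 0 k = (if k = 0 then 1 else 0)"
proof -
  have "{w :: nat list. length w = 0 \<and> set w = {1..k} \<and> avoids010 w \<and> avoids120 w} = (if k = 0 then {[]} else {})"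
    using av_Nil by auto
  then show ?thesis by (simp add: fw_def)
qed

lemma last_term: "(\<Sum>i=0..m. fw i k * fw (m-i) 0) = fw m k"
proof -
  have "(\<Sum>i=0..m. fw i k * fw (m-i) 0) = (\<Sum>i=0..m. if i = m then fw i k else 0)"
    by (rule sum.cong) (auto simp: fw_n0)
  also have "\<dots> = fw m k" by simp
  finally show ?thesis .
qed

lemma key_nat:
  "(\<Sum>i=0..m. \<Sum>j=0..k. fw i j * fw (m-i) (k-j))
   + (if k = 0 then 0 else (\<Sum>i=0..m. \<Sum>j=0..k-1. fw i j * fw (m-i) (k-1-j)))
   = fw (Suc m) k + fw m k"
proof (cases "k = 0")
  case True
  then show ?thesis using last_term[where m=m and k=0] by (simp add: fw_n0)
next
  case False
  then obtain k' where k: "k = Suc k'" by (cases k) auto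
  have r: "fw (Suc m) k = (\<Sum>p = 1..Suc m. \<Sum>q = 0..k - 1. fw (p - 1) q * (fw (Suc m - p) (k - q) + fw (Suc m - p) (k - q - 1)))"
    using recurrence[of "Suc m" k] False by simp
  also have "\<dots> = (\<Sum>i = 0..m. \<Sum>q = 0..k'. fw i q * (fw (m - i) (k - q) + fw (m - i) (k' - q)))"
    unfolding One_nat_def sum.shift_bounds_cl_Suc_ivl by (simp add: k)
  also have "\<dots> = (\<Sum>i = 0..m. \<Sum>q = 0..k'. fw i q * fw (m - i) (k - q)) + (\<Sum>i = 0..m. \<Sum>q = 0..k'. fw i q * fw (m - i) (k' - q))"
    by (simp add: algebra_simps sum.distrib)
  finally have r2: "fw (Suc m) k = \<dots>" .
  have s: "(\<Sum>i=0..m. \<Sum>j=0..k. fw i j * fw (m-i) (k-j)) = (\<Sum>i = 0..m. \<Sum>q = 0..k'. fw i q * fw (m - i) (k - q)) + fw m k"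
    using last_term[where m=m and k="Suc k'"] by (simp add: k sum.distrib)
  show ?thesis using r2 s False k by simp
qed



lemma FGF_nth: "fps_nth (fps_nth FGF i) j = int (fw i j)"
  by (simp add: FGF_def)

lemma sq_nth: "fps_nth (fps_nth (FGF ^ 2) m) k = int (\<Sum>i=0..m. \<Sum>j=0..k. fw i j * fw (m-i) (k-j))"
  by (simp add: power2_eq_square fps_mult_nth fps_sum_nth FGF_nth)

lemma GF: "(fps_X + fps_X * fps_const fps_X) * FGF ^ 2 - (fps_X + 1) * FGF + 1 = (0 :: int fps fps)"
proof -
  let ?F = FGF
  have e: "(fps_X + fps_X * fps_const fps_X) * ?F ^ 2 - (fps_X + 1) * ?F + 1
      = fps_X * (?F ^ 2 + fps_const fps_X * ?F ^ 2) - fps_X * ?F - ?F + 1"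
    by (simp add: algebra_simps)
  show ?thesis unfolding e
  proof (rule fps_ext)
    fix n
    show "fps_nth (fps_X * (?F ^ 2 + fps_const fps_X * ?F ^ 2) - fps_X * ?F - ?F + 1) n = fps_nth 0 n"
    proof (cases n)
      case 0
      have "fps_nth ?F 0 = 1" by (rule fps_ext) (simp add: FGF_nth fw_0k)
      then show ?thesis using 0 by simp
    next
      case (Suc m)
      have "fps_nth (fps_X * (?F ^ 2 + fps_const fps_X * ?F ^ 2) - fps_X * ?F - ?F + 1) n
          = fps_nth (?F ^ 2) m + fps_X * fps_nth (?F ^ 2) m - fps_nth ?F m - fps_nth ?F (Suc m)"
        using Suc by simp
      also have "\<dots> = 0"
      proof (rule fps_ext)
        fix k
        have "fps_nth (fps_nth (?F ^ 2) m + fps_X * fps_nth (?F ^ 2) m - fps_nth ?F m - fps_nth ?F (Suc m)) k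
            = int (\<Sum>i=0..m. \<Sum>j=0..k. fw i j * fw (m-i) (k-j))
              + (if k = 0 then 0 else int (\<Sum>i=0..m. \<Sum>j=0..k-1. fw i j * fw (m-i) (k-1-j)))
              - int (fw m k) - int (fw (Suc m) k)"
          by (simp add: sq_nth FGF_nth)
        also have "\<dots> = 0" using arg_cong[OF key_nat[of m k], of int] by (cases "k = 0") simp_all
        finally show "fps_nth (fps_nth (?F ^ 2) m + fps_X * fps_nth (?F ^ 2) m - fps_nth ?F m - fps_nth ?F (Suc m)) k = fps_nth 0 k" by simp
      qed
      finally show ?thesis by simp
    qed
  qed
qed


theorem mainTheorem4:
  shows "(\<forall>n k. 1 \<le> n \<longrightarrow> 1 \<le> k \<longrightarrow>
           fw n k = (\<Sum>p = 1..n. \<Sum>q = 0..k - 1.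
                      fw (p - 1) q * (fw (n - p) (k - q) + fw (n - p) (k - q - 1))))
       \<and> (fps_X + fps_X * fps_const fps_X) * FGF ^ 2 - (fps_X + 1) * FGF + 1 = 0"
proof (intro conjI allI impI)
  fix n k :: nat
  assume "1 \<le> n" "1 \<le> k"
  then show "fw n k = (\<Sum>p = 1..n. \<Sum>q = 0..k - 1.
                      fw (p - 1) q * (fw (n - p) (k - q) + fw (n - p) (k - q - 1)))"
    by (rule recurrence)
next
  show "(fps_X + fps_X * fps_const fps_X) * FGF ^ 2 - (fps_X + 1) * FGF + 1 = 0"
    by (rule GF)
qed

end
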